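(* Consider a clinical activity network built from a finite set of activities as follows: each activity $v$ is represented by a start node $v^s$ and an end node $v^e$ joined by an arc $(v^s,v^e)$; the other arcs are of the form $(u^e,v^s)$ (possibly $u=v$), $(\mathrm{START},v^s)$ or $(v^e,\mathrm{END})$, where START and END are two artificial nodes (we write $\mathrm{START}^e=\mathrm{START}$ and $\mathrm{END}^s=\mathrm{END}$). Let $\mathbf{c}^*\in\mathbb{R}^n$ be arc costs. A sequence of activities $(\nu_1,\dots,\nu_k)$ corresponds to the walk $\mathrm{START}\to\nu_1^s\to\nu_1^e\to\cdots\to\nu_k^s\to\nu_k^e\to\mathrm{END}$ (assumed to use only arcs of the network), and its flow vector counts the number of traversals of each arc. Let $\mathbf{x}^*$ be a shortest START–END path under $\mathbf{c}^*$, given by the activity sequence $(\gamma_1,\dots,\gamma_K)$; set $\gamma_0=\mathrm{START}$, $\gamma_{K+1}=\mathrm{END}$. Let $\hat{\mathbf{x}}$ be a patient pathway whose activity sequence is written as $(\Delta_0,\Gamma_1,\Delta_1,\Gamma_2,\dots,\Gamma_K,\Delta_K)$ (between START and END), where each $\Gamma_i\in\{\emptyset,\gamma_i\}$, each $\Delta_i$ is a (possibly empty) finite sequence of activities, and $\Delta_i=\emptyset$ whenever $\Gamma_i=\emptyset$ ($1\le i\le K$). Let $\Gamma_0=\gamma_0$, $\Gamma_{K+1}=\gamma_{K+1}$. For each pair of indices $i<i+l$ with $\Gamma_i=\gamma_i$, $\Gamma_{i+l}=\gamma_{i+l}$ and $\Gamma_{i+1}=\dots=\Gamma_{i+l-1}=\emptyset$,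 if $l>1$ or $\Delta_i\neq\emptyset$, this gap is called a detour $\theta$ (from $\gamma_i$ to $\gamma_{i+l}$, with discordant activities $\Delta_i$). Define its cost $$C(\theta)=\frac{E(\theta)-F(\theta)}{M(\hat{\mathbf{x}})-\mathbf{c}^{*\top}\mathbf{x}^*},$$ where $E(\theta)$ is the total $\mathbf{c}^*$-cost of the arcs of the patient walk from $\gamma_i^e$ to $\gamma_{i+l}^s$ (i.e. $c^*_{\gamma_i^e\delta_1^s}+\phi(\Delta_i)+c^*_{\delta_k^e\gamma_{i+l}^s}$ if $\Delta_i=(\delta_1,\dots,\delta_k)\ne\emptyset$, and $c^*_{\gamma_i^e\gamma_{i+l}^s}$ if $\Delta_i=\emptyset$), and $F(\theta)$ is the total $\mathbf{c}^*$-cost of the arcs of the reference walk $\mathbf{x}^*$ from $\gamma_i^e$ to $\gamma_{i+l}^s$ (i.e. $c^*_{\gamma_i^e\gamma_{i+1}^s}+\phi((\gamma_{i+1},\dots,\gamma_{i+l-1}))+c^*_{\gamma_{i+l-1}^e\gamma_{i+l}^s}$ for $l>1$, and $c^*_{\gamma_i^e\gamma_{i+1}^s}$ for $l=1$). Here $\phi((\nu_1,\dots,\nu_k))=\sum_{j=1}^{k-1}c^*_{\nu_j^e\nu_{j+1}^s}+\sum_{j=1}^k c^*_{\nu_j^s\nu_j^e}$, and $M(\hat{\mathbf{x}})=\max\{\mathbf{c}^{*\top}\mathbf{x}: \mathbf{x}$ is the flow vector of a START–END walk with $\|\mathbf{x}\|_1\le\|\hat{\mathbf{x}}\|_1\}$,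 assumed to differ from $\mathbf{c}^{*\top}\mathbf{x}^*$. Let $\Theta$ be the set of all detours of $\hat{\mathbf{x}}$, and let $\omega(\hat{\mathbf{x}})=1-\dfrac{\mathbf{c}^{*\top}\hat{\mathbf{x}}-\mathbf{c}^{*\top}\mathbf{x}^*}{M(\hat{\mathbf{x}})-\mathbf{c}^{*\top}\mathbf{x}^*}$. Then $$\omega(\hat{\mathbf{x}})=1-\sum_{\theta\in\Theta}C(\theta).$$
   Context: $\omega(\hat{\mathbf{x}})$ is the concordance score of the patient pathway $\hat{\mathbf{x}}$; in the paper $\mathbf{c}^*$ is an arc cost vector obtained by inverse optimization, and $\mathbf{x}^*$ is a reference (concordant) pathway assumed to be a shortest path under $\mathbf{c}^*$. $\Gamma_i$ marks whether the concordant activity $\gamma_i$ appears in its place in the patient pathway, and $\Delta_i$ are the extra (discordant) activities occurring after it. *)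

theory Defs
  imports Main Complex_Main
begin

datatype 'a node = Start | End | Snode 'a | Enode 'a

type_synonym 'a arc = "'a node \<times> 'a node"

definition activity_network :: "'a set \<Rightarrow> 'a arc set \<Rightarrow> bool" where
  "activity_network V A \<longleftrightarrow> finite V \<and>
     (\<forall>v\<in>V. (Snode v, Enode v) \<in> A) \<and>
     (\<forall>a\<in>A. (\<exists>v\<in>V. a = (Snode v, Enode v)) \<or>
             (\<exists>u\<in>V. \<exists>v\<in>V. a = (Enode u, Snode v)) \<or>
             (\<exists>v\<in>V. a = (Start, Snode v)) \<or>
             (\<exists>v\<in>V. a = (Enode v, End)))"

definition walk_arcs :: "'a node list \<Rightarrow> 'a arc list" where
  "walk_arcs ns = zip ns (tl ns)"

definition st_walk :: "'a arc set \<Rightarrow> 'a node list \<Rightarrow> bool" where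
  "st_walk A ns \<longleftrightarrow> ns \<noteq> [] \<and> hd ns = Start \<and> last ns = End \<and> set (walk_arcs ns) \<subseteq> A"

definition st_path :: "'a arc set \<Rightarrow> 'a node list \<Rightarrow> bool" where
  "st_path A ns \<longleftrightarrow> st_walk A ns \<and> distinct ns"

definition flow :: "'a node list \<Rightarrow> 'a arc \<Rightarrow> nat" where
  "flow ns a = count_list (walk_arcs ns) a"

definition lin :: "('a arc \<Rightarrow> real) \<Rightarrow> 'a arc set \<Rightarrow> ('a arc \<Rightarrow> nat) \<Rightarrow> real" where
  "lin c A x = (\<Sum>a\<in>A. c a * real (x a))"

definition norm1 :: "'a arc set \<Rightarrow> ('a arc \<Rightarrow> nat) \<Rightarrow> nat" where
  "norm1 A x = (\<Sum>a\<in>A. x a)"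

definition act_nodes :: "'a list \<Rightarrow> 'a node list" where
  "act_nodes xs = concat (map (\<lambda>v. [Snode v, Enode v]) xs)"

definition seq_walk :: "'a list \<Rightarrow> 'a node list" where
  "seq_walk xs = Start # act_nodes xs @ [End]"

definition Mval :: "('a arc \<Rightarrow> real) \<Rightarrow> 'a arc set \<Rightarrow> ('a arc \<Rightarrow> nat) \<Rightarrow> real" where
  "Mval c A x = Max {lin c A (flow ns) | ns. st_walk A ns \<and> norm1 A (flow ns) \<le> norm1 A x}"

definition phi :: "('a arc \<Rightarrow> real) \<Rightarrow> 'a list \<Rightarrow> real" where
  "phi c xs = (\<Sum>j<length xs - 1. c (Enode (xs ! j), Snode (xs ! (j+1))))
             + (\<Sum>j<length xs. c (Snode (xs ! j), Enode (xs ! j)))"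

text \<open>Reference sequence gam = (gamma_1,...,gamma_K); gamma_0 = START, gamma_{K+1} = END.
  gam_e i is gamma_i^e (with START^e = START), gam_s i is gamma_i^s (with END^s = END).\<close>
definition gam_e :: "'a list \<Rightarrow> nat \<Rightarrow> 'a node" where
  "gam_e gam i = (if i = 0 then Start else Enode (gam ! (i - 1)))"

definition gam_s :: "'a list \<Rightarrow> nat \<Rightarrow> 'a node" where
  "gam_s gam i = (if i = length gam + 1 then End else Snode (gam ! (i - 1)))"

text \<open>Patient sequence (Delta_0, Gamma_1, Delta_1, ..., Gamma_K, Delta_K), where
  Gamma_i = gamma_i if g i and Gamma_i is empty otherwise.\<close>
definition patient_seq :: "'a list \<Rightarrow> (nat \<Rightarrow> bool) \<Rightarrow> (nat \<Rightarrow> 'a list) \<Rightarrow> 'a list" where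
  "patient_seq gam g D =
     D 0 @ concat (map (\<lambda>i. (if g i then [gam ! (i - 1)] else []) @ D i) [1..<length gam + 1])"

definition present :: "'a list \<Rightarrow> (nat \<Rightarrow> bool) \<Rightarrow> nat \<Rightarrow> bool" where
  "present gam g i \<longleftrightarrow> i = 0 \<or> i = length gam + 1 \<or> (1 \<le> i \<and> i \<le> length gam \<and> g i)"

text \<open>Detours, represented as pairs (i, i+l).\<close>
definition detours :: "'a list \<Rightarrow> (nat \<Rightarrow> bool) \<Rightarrow> (nat \<Rightarrow> 'a list) \<Rightarrow> (nat \<times> nat) set" where
  "detours gam g D = {(i, j). i < j \<and> j \<le> length gam + 1 \<and> present gam g i \<and> present gam g j \<and>
        (\<forall>m. i < m \<and> m < j \<longrightarrow> \<not> present gam g m) \<and> (j - i > 1 \<or> D i \<noteq> [])}"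

definition Ecost :: "('a arc \<Rightarrow> real) \<Rightarrow> 'a list \<Rightarrow> (nat \<Rightarrow> 'a list) \<Rightarrow> nat \<times> nat \<Rightarrow> real" where
  "Ecost c gam D \<theta> = (case \<theta> of (i, j) \<Rightarrow>
     (if D i = [] then c (gam_e gam i, gam_s gam j)
      else c (gam_e gam i, Snode (hd (D i))) + phi c (D i) + c (Enode (last (D i)), gam_s gam j)))"

definition Fcost :: "('a arc \<Rightarrow> real) \<Rightarrow> 'a list \<Rightarrow> nat \<times> nat \<Rightarrow> real" where
  "Fcost c gam \<theta> = (case \<theta> of (i, j) \<Rightarrow>
     (if j = i + 1 then c (gam_e gam i, gam_s gam (i + 1))
      else c (gam_e gam i, gam_s gam (i + 1)) + phi c (map (\<lambda>m. gam ! (m - 1)) [i+1..<j])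
           + c (gam_e gam (j - 1), gam_s gam j)))"

definition detour_cost ::
  "('a arc \<Rightarrow> real) \<Rightarrow> 'a arc set \<Rightarrow> 'a list \<Rightarrow> 'a list \<Rightarrow> (nat \<Rightarrow> 'a list) \<Rightarrow> nat \<times> nat \<Rightarrow> real" where
  "detour_cost c A gam pat D \<theta> =
     (Ecost c gam D \<theta> - Fcost c gam \<theta>) /
     (Mval c A (flow (seq_walk pat)) - lin c A (flow (seq_walk gam)))"

definition omega :: "('a arc \<Rightarrow> real) \<Rightarrow> 'a arc set \<Rightarrow> 'a list \<Rightarrow> 'a list \<Rightarrow> real" where
  "omega c A gam pat =
     1 - (lin c A (flow (seq_walk pat)) - lin c A (flow (seq_walk gam))) /
         (Mval c A (flow (seq_walk pat)) - lin c A (flow (seq_walk gam)))"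

end

theory Submission imports Defs begin

definition wc :: "('a arc \<Rightarrow> real) \<Rightarrow> 'a node list \<Rightarrow> real" where
  "wc c ns = sum_list (map c (walk_arcs ns))"

lemma wc_Nil[simp]: "wc c [] = 0" by (simp add: wc_def walk_arcs_def)
lemma wc_single[simp]: "wc c [x] = 0" by (simp add: wc_def walk_arcs_def)
lemma wc_Cons2[simp]: "wc c (x # y # ys) = c (x, y) + wc c (y # ys)"
  by (simp add: wc_def walk_arcs_def)

lemma wc_app: "wc c (Z @ a # ys) = wc c (Z @ [a]) + wc c (a # ys)"
proof (induction Z rule: induct_list012)
  case (3 x y zs) then show ?case by simp
qed simp_all

lemma wc_snoc2: "wc c (L @ [a, b]) = wc c (L @ [a]) + c (a, b)"
  using wc_app[of c L a "[b]"] by simp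

lemma lin_list:
  assumes "finite A" "set xs \<subseteq> A"
  shows "(\<Sum>a\<in>A. c a * real (count_list xs a)) = sum_list (map c xs)"
  using assms(2)
proof (induction xs)
  case Nil then show ?case by simp
next
  case (Cons x xs)
  have "(\<Sum>a\<in>A. c a * real (count_list (x # xs) a))
      = (\<Sum>a\<in>A. (if a = x then c a else 0)) + (\<Sum>a\<in>A. c a * real (count_list xs a))"
    by (subst sum.distrib[symmetric]) (rule sum.cong, auto simp: algebra_simps)
  also have "(\<Sum>a\<in>A. (if a = x then c a else 0)) = c x"
    using Cons.prems assms(1) by (simp add: sum.delta')
  finally show ?case using Cons by simp
qed

lemma lin_wc:
  assumes "finite A" "set (walk_arcs ns) \<subseteq> A"
  shows "lin c A (flow ns) = wc c ns"
  using lin_list[OF assms] by (simp add: lin_def flow_def wc_def)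

lemma net_finite:
  assumes "activity_network V A" shows "finite A"
proof -
  have fV: "finite V" using assms by (simp add: activity_network_def)
  have "A \<subseteq> (\<lambda>v. (Snode v, Enode v)) ` V \<union> (\<lambda>(u,v). (Enode u, Snode v)) ` (V \<times> V)
          \<union> (\<lambda>v. (Start, Snode v)) ` V \<union> (\<lambda>v. (Enode v, End)) ` V"
    using assms unfolding activity_network_def by fastforce
  moreover have "finite ((\<lambda>v. (Snode v, Enode v)) ` V \<union> (\<lambda>(u,v). (Enode u, Snode v)) ` (V \<times> V)
          \<union> (\<lambda>v. (Start, Snode v)) ` V \<union> (\<lambda>v. (Enode v, End)) ` V)" using fV by simp
  ultimately show ?thesis by (rule finite_subset)
qed

lemma act_nodes_simps[simp]:
  "act_nodes [] = []" "act_nodes (x # xs) = Snode x # Enode x # act_nodes xs"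
  "act_nodes (xs @ ys) = act_nodes xs @ act_nodes ys"
  by (simp_all add: act_nodes_def)

lemma phi_Nil[simp]: "phi c [] = 0" by (simp add: phi_def)
lemma phi_Cons: "phi c (x # xs) = c (Snode x, Enode x) +
   (case xs of [] \<Rightarrow> 0 | y # _ \<Rightarrow> c (Enode x, Snode y)) + phi c xs"
  by (cases xs) (simp_all add: phi_def sum.lessThan_Suc_shift del: sum.lessThan_Suc)

lemma phi_wc: "phi c xs = wc c (act_nodes xs)"
proof (induction xs)
  case (Cons x xs) then show ?case
    by (cases xs) (simp_all add: phi_Cons)
qed simp

lemma hd_act: "xs \<noteq> [] \<Longrightarrow> hd (act_nodes xs) = Snode (hd xs)"
  by (cases xs) auto
lemma act_nodes_Nil_iff[simp]: "act_nodes xs = [] \<longleftrightarrow> xs = []"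
  by (cases xs) auto
lemma last_act: "xs \<noteq> [] \<Longrightarrow> last (act_nodes xs) = Enode (last xs)"
  by (induction xs) auto

lemma wc_mid: "L \<noteq> [] \<Longrightarrow> wc c (a # L @ [b]) = c (a, hd L) + wc c L + c (last L, b)"
proof -
  assume "L \<noteq> []"
  then obtain L' l where L: "L = L' @ [l]" by (metis rev_exhaust)
  have "wc c (a # L' @ [l] @ [b]) = wc c ((a # L') @ [l]) + wc c [l, b]"
    using wc_app[of c "a # L'" l "[b]"] by simp
  moreover have "wc c (a # L' @ [l]) = c (a, hd (L' @ [l])) + wc c (L' @ [l])"
    by (cases L') simp_all
  ultimately show ?thesis using L by simp
qed

fun lp :: "(nat \<Rightarrow> bool) \<Rightarrow> nat \<Rightarrow> nat" where
  "lp g 0 = 0"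
| "lp g (Suc n) = (if g (Suc n) then Suc n else lp g n)"

lemma lp_le: "lp g n \<le> n" by (induction n) auto
lemma lp_g: "lp g n = 0 \<or> g (lp g n)" by (induction n) auto
lemma lp_between: "lp g n < m \<Longrightarrow> m \<le> n \<Longrightarrow> \<not> g m"
  by (induction n) (auto simp: le_Suc_eq split: if_splits)
lemma lp_unique: "i \<le> n \<Longrightarrow> i = 0 \<or> g i \<Longrightarrow> (\<And>m. i < m \<Longrightarrow> m \<le> n \<Longrightarrow> \<not> g m) \<Longrightarrow> lp g n = i"
proof (induction n)
  case (Suc n) then show ?case
    by (cases "i = Suc n") (auto simp: le_Suc_eq)
qed simp

definition Pn :: "'a list \<Rightarrow> (nat \<Rightarrow> bool) \<Rightarrow> (nat \<Rightarrow> 'a list) \<Rightarrow> nat \<Rightarrow> 'a list" where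
  "Pn gam g D n = D 0 @ concat (map (\<lambda>i. (if g i then [gam ! (i - 1)] else []) @ D i) [1..<n+1])"

definition tailP where "tailP gam D p = gam_e gam p # act_nodes (D p)"
definition tailR where "tailR gam p n = gam_e gam p # act_nodes (map (\<lambda>m. gam ! (m - 1)) [p+1..<n+1])"
definition Ew where "Ew c gam D i j = wc c (tailP gam D i @ [gam_s gam j])"
definition Fw where "Fw c gam i j = wc c (tailR gam i (j - 1) @ [gam_s gam j])"
definition Sn where "Sn c gam g D n = (\<Sum>j\<in>{1..n}. if g j then Ew c gam D (lp g (j-1)) j - Fw c gam (lp g (j-1)) j else 0)"

lemma Pn_Suc: "Pn gam g D (Suc n) = Pn gam g D n @ (if g (Suc n) then [gam ! n] else []) @ D (Suc n)"
  by (simp add: Pn_def)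

lemma invariant:
  assumes gaps: "\<And>i. 1 \<le> i \<Longrightarrow> i \<le> length gam \<Longrightarrow> \<not> g i \<Longrightarrow> D i = []"
  shows "n \<le> length gam \<Longrightarrow> \<exists>Zp Zr. Start # act_nodes (Pn gam g D n) = Zp @ tailP gam D (lp g n) \<and>
     Start # act_nodes (take n gam) = Zr @ tailR gam (lp g n) n \<and>
     wc c (Zp @ [gam_e gam (lp g n)]) - wc c (Zr @ [gam_e gam (lp g n)]) = Sn c gam g D n"
proof (induction n)
  case 0 then show ?case
    by (intro exI[of _ "[]"]) (simp add: Pn_def tailP_def tailR_def gam_e_def Sn_def)
next
  case (Suc n)
  then obtain Zp Zr where
    P: "Start # act_nodes (Pn gam g D n) = Zp @ tailP gam D (lp g n)" and
    R: "Start # act_nodes (take n gam) = Zr @ tailR gam (lp g n) n" and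
    W: "wc c (Zp @ [gam_e gam (lp g n)]) - wc c (Zr @ [gam_e gam (lp g n)]) = Sn c gam g D n"
    by auto
  have nK: "n < length gam" using Suc by simp
  have tk: "take (Suc n) gam = take n gam @ [gam ! n]" using nK by (simp add: take_Suc_conv_app_nth)
  define p where "p = lp g n"
  have pn: "p \<le> n" using lp_le p_def by simp
  have gs: "gam_s gam (Suc n) = Snode (gam ! n)" using nK by (simp add: gam_s_def)
  have ge: "gam_e gam (Suc n) = Enode (gam ! n)" by (simp add: gam_e_def)
  show ?case
  proof (cases "g (Suc n)")
    case False
    have D: "D (Suc n) = []" using gaps[of "Suc n"] nK False by simp
    have tR: "tailR gam p (Suc n) = tailR gam p n @ [Snode (gam ! n), Enode (gam ! n)]"
      using pn by (simp add: tailR_def)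
    have S: "Sn c gam g D (Suc n) = Sn c gam g D n" using False by (simp add: Sn_def)
    show ?thesis
      using P R W False D tR S
      by (intro exI[of _ Zp] exI[of _ Zr]) (simp add: Pn_Suc tk p_def)
  next
    case True
    have tP': "tailP gam D (Suc n) = Enode (gam ! n) # act_nodes (D (Suc n))"
      by (simp add: tailP_def ge)
    have tR': "tailR gam (Suc n) (Suc n) = [Enode (gam ! n)]"
      by (simp add: tailR_def ge)
    have hP: "tailP gam D p = gam_e gam p # act_nodes (D p)" by (simp add: tailP_def)
    have hR: "tailR gam p n = gam_e gam p # act_nodes (map (\<lambda>m. gam ! (m - 1)) [p+1..<n+1])" by (simp add: tailR_def)
    have S: "Sn c gam g D (Suc n) = Sn c gam g D n + (Ew c gam D p (Suc n) - Fw c gam p (Suc n))"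
      using True by (simp add: Sn_def p_def)
    have e1: "wc c ((Zp @ tailP gam D p @ [Snode (gam ! n)]) @ [Enode (gam ! n)])
       = wc c (Zp @ [gam_e gam p]) + Ew c gam D p (Suc n) + c (Snode (gam ! n), Enode (gam ! n))"
      using wc_snoc2[of c "Zp @ tailP gam D p" "Snode (gam ! n)" "Enode (gam ! n)"]
        wc_app[of c Zp "gam_e gam p" "act_nodes (D p) @ [Snode (gam ! n)]"]
      by (simp add: hP Ew_def gs)
    have e2: "wc c ((Zr @ tailR gam p n @ [Snode (gam ! n)]) @ [Enode (gam ! n)])
       = wc c (Zr @ [gam_e gam p]) + Fw c gam p (Suc n) + c (Snode (gam ! n), Enode (gam ! n))"
      using wc_snoc2[of c "Zr @ tailR gam p n" "Snode (gam ! n)" "Enode (gam ! n)"]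
        wc_app[of c Zr "gam_e gam p" "act_nodes (map (\<lambda>m. gam ! (m - 1)) [p+1..<n+1]) @ [Snode (gam ! n)]"]
      by (simp add: hR Fw_def gs)
    show ?thesis
      apply (rule exI[of _ "Zp @ tailP gam D p @ [Snode (gam ! n)]"], rule exI[of _ "Zr @ tailR gam p n @ [Snode (gam ! n)]"])
      using P R W True tP' tR' S e1 e2 by (simp add: Pn_Suc tk p_def ge)
  qed
qed

lemma Ecost_Ew: "Ecost c gam D (i, j) = Ew c gam D i j"
proof (cases "D i = []")
  case True then show ?thesis by (simp add: Ecost_def Ew_def tailP_def)
next
  case False then show ?thesis
    using wc_mid[of "act_nodes (D i)" c "gam_e gam i" "gam_s gam j"]
    by (simp add: Ecost_def Ew_def tailP_def phi_wc hd_act last_act)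
qed

lemma Fcost_Fw:
  assumes "i < j" "j \<le> length gam + 1"
  shows "Fcost c gam (i, j) = Fw c gam i j"
proof (cases "j = i + 1")
  case True then show ?thesis by (simp add: Fcost_def Fw_def tailR_def)
next
  case False
  let ?xs = "map (\<lambda>m. gam ! (m - 1)) [i+1..<j]"
  have ne: "?xs \<noteq> []" using assms False by simp
  have j1: "j - 1 + 1 = j" using assms by simp
  have ij: "i + 1 < j" using assms False by simp
  have hd: "hd ?xs = gam ! i" using ij by (simp add: hd_map)
  have lst0: "last [i+1..<j] = j - 1" using ij by simp
  have lst: "last ?xs = gam ! (j - 2)" using ij lst0 by (simp add: last_map numeral_2_eq_2)
  have gs: "gam_s gam (i + 1) = Snode (gam ! i)" using assms False by (simp add: gam_s_def)
  have ge: "gam_e gam (j - 1) = Enode (gam ! (j - 2))" using assms False by (simp add: gam_e_def numeral_2_eq_2)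
  let ?L = "act_nodes ?xs"
  have neL: "?L \<noteq> []" using ne by simp
  have "Fw c gam i j = wc c (gam_e gam i # ?L @ [gam_s gam j])"
    unfolding Fw_def tailR_def j1 by simp
  also have "\<dots> = c (gam_e gam i, hd ?L) + wc c ?L + c (last ?L, gam_s gam j)"
    by (rule wc_mid[OF neL])
  also have "hd ?L = gam_s gam (i+1)" using hd_act[OF ne] hd gs by simp
  also have "last ?L = gam_e gam (j-1)" using last_act[OF ne] lst ge by simp
  also have "wc c ?L = phi c ?xs" by (simp add: phi_wc)
  finally show ?thesis using False by (simp add: Fcost_def)
qed

theorem theorem1:
  fixes V :: "'a set" and A :: "'a arc set" and c :: "'a arc \<Rightarrow> real"
    and gam :: "'a list" and g :: "nat \<Rightarrow> bool" and D :: "nat \<Rightarrow> 'a list"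
  assumes net: "activity_network V A"
    and ref_path: "st_path A (seq_walk gam)"
    and shortest: "\<And>ns. st_path A ns \<Longrightarrow> lin c A (flow (seq_walk gam)) \<le> lin c A (flow ns)"
    and gaps: "\<And>i. 1 \<le> i \<Longrightarrow> i \<le> length gam \<Longrightarrow> \<not> g i \<Longrightarrow> D i = []"
    and pat_walk: "st_walk A (seq_walk (patient_seq gam g D))"
    and M_ne: "Mval c A (flow (seq_walk (patient_seq gam g D))) \<noteq> lin c A (flow (seq_walk gam))"
  shows "omega c A gam (patient_seq gam g D)
         = 1 - (\<Sum>\<theta>\<in>detours gam g D. detour_cost c A gam (patient_seq gam g D) D \<theta>)"
proof -
  define K where "K = length gam"
  define pat where "pat = patient_seq gam g D"
  define p where "p = lp g K"
  define h where "h = (\<lambda>\<theta>. Ecost c gam D \<theta> - Fcost c gam \<theta>)"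
  define den where "den = Mval c A (flow (seq_walk pat)) - lin c A (flow (seq_walk gam))"
  have fA: "finite A" using net_finite[OF net] .
  have linP: "lin c A (flow (seq_walk pat)) = wc c (seq_walk pat)"
    using lin_wc[OF fA] pat_walk by (simp add: st_walk_def pat_def)
  have linR: "lin c A (flow (seq_walk gam)) = wc c (seq_walk gam)"
    using lin_wc[OF fA] ref_path by (simp add: st_walk_def st_path_def)
  obtain Zp Zr where
    P: "Start # act_nodes (Pn gam g D K) = Zp @ tailP gam D p" and
    R: "Start # act_nodes (take K gam) = Zr @ tailR gam p K" and
    W: "wc c (Zp @ [gam_e gam p]) - wc c (Zr @ [gam_e gam p]) = Sn c gam g D K"
    using invariant[where gam=gam and g=g and D=D and n=K and c=c, OF gaps] by (auto simp: K_def p_def)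
  have gsK: "gam_s gam (Suc K) = End" by (simp add: gam_s_def K_def)
  have wP: "wc c (seq_walk pat) = wc c (Zp @ [gam_e gam p]) + Ew c gam D p (K + 1)"
  proof -
    have "seq_walk pat = Zp @ gam_e gam p # act_nodes (D p) @ [End]"
      using P by (simp add: seq_walk_def pat_def Pn_def patient_seq_def K_def tailP_def)
    then show ?thesis using wc_app[of c Zp "gam_e gam p" "act_nodes (D p) @ [End]"]
      by (simp add: Ew_def tailP_def gsK)
  qed
  have wR: "wc c (seq_walk gam) = wc c (Zr @ [gam_e gam p]) + Fw c gam p (K + 1)"
  proof -
    have "seq_walk gam = Zr @ gam_e gam p # act_nodes (map (\<lambda>m. gam ! (m - 1)) [p+1..<K+1]) @ [End]"
      using R by (simp add: seq_walk_def K_def tailR_def)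
    then show ?thesis using wc_app[of c Zr "gam_e gam p" "act_nodes (map (\<lambda>m. gam ! (m - 1)) [p+1..<K+1]) @ [End]"]
      by (simp add: Fw_def tailR_def gsK)
  qed
  have diff: "wc c (seq_walk pat) - wc c (seq_walk gam) = Sn c gam g D K + (Ew c gam D p (K + 1) - Fw c gam p (K + 1))"
    using wP wR W by simp
  define f where "f = (\<lambda>j. (lp g (j - 1), j))"
  define J where "J = {j\<in>{1..K+1}. present gam g j}"
  have fin: "finite (f ` J)" by (simp add: J_def)
  have sub: "detours gam g D \<subseteq> f ` J"
  proof
    fix \<theta> assume th: "\<theta> \<in> detours gam g D"
    then obtain i j where ij: "\<theta> = (i, j)" "i < j" "j \<le> K + 1" "present gam g i" "present gam g j"
      "\<And>m. i < m \<Longrightarrow> m < j \<Longrightarrow> \<not> present gam g m"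
      by (auto simp: detours_def K_def)
    have "lp g (j - 1) = i"
    proof (rule lp_unique)
      show "i \<le> j - 1" using ij by simp
      show "i = 0 \<or> g i" using ij by (auto simp: present_def K_def)
      fix m assume "i < m" "m \<le> j - 1"
      then show "\<not> g m" using ij(6)[of m] ij(3) by (auto simp: present_def K_def)
    qed
    then show "\<theta> \<in> f ` J" using ij by (auto simp: f_def J_def intro!: image_eqI[of _ _ j])
  qed
  have zero: "\<forall>\<theta>\<in>f ` J - detours gam g D. h \<theta> = 0"
  proof
    fix \<theta> assume th: "\<theta> \<in> f ` J - detours gam g D"
    then obtain j where j: "j \<in> J" "\<theta> = (lp g (j - 1), j)" by (auto simp: f_def)
    define i where "i = lp g (j - 1)"
    have j1: "1 \<le> j" "j \<le> K + 1" "present gam g j" using j by (auto simp: J_def)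
    have ilt: "i < j" using lp_le[of g "j - 1"] j1 by (simp add: i_def)
    have pi: "present gam g i" using lp_g[of g "j - 1"] lp_le[of g "j - 1"] j1
      by (auto simp: present_def i_def K_def)
    have btw: "\<forall>m. i < m \<and> m < j \<longrightarrow> \<not> present gam g m"
      using lp_between[of g "j - 1"] j1 by (auto simp: present_def i_def K_def)
    have "\<not> (j - i > 1 \<or> D i \<noteq> [])"
      using th j ilt j1 pi btw by (auto simp: detours_def i_def K_def)
    then have "j = i + 1" "D i = []" using ilt by auto
    then show "h \<theta> = 0" using j by (simp add: h_def Ecost_def Fcost_def i_def)
  qed
  have "(\<Sum>\<theta>\<in>detours gam g D. h \<theta>) = (\<Sum>\<theta>\<in>f ` J. h \<theta>)"
    using sum.mono_neutral_left[OF fin sub zero] .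
  also have "\<dots> = (\<Sum>j\<in>J. h (f j))"
    by (rule sum.reindex_cong[of f]) (auto simp: inj_on_def f_def)
  also have "\<dots> = (\<Sum>j\<in>{1..K+1}. if present gam g j then h (f j) else 0)"
    unfolding J_def by (rule sum.inter_filter) (simp)
  also have "\<dots> = (\<Sum>j\<in>{1..K}. if present gam g j then h (f j) else 0) + h (f (K + 1))"
    by (simp add: present_def K_def)
  also have "(\<Sum>j\<in>{1..K}. if present gam g j then h (f j) else 0) = Sn c gam g D K"
    unfolding Sn_def
  proof (rule sum.cong)
    fix j assume "j \<in> {1..K}"
    then have j: "1 \<le> j" "j \<le> K" by auto
    have "lp g (j - 1) < j" using lp_le[of g "j - 1"] j by simp
    then show "(if present gam g j then h (f j) else 0) =
      (if g j then Ew c gam D (lp g (j - 1)) j - Fw c gam (lp g (j - 1)) j else 0)"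
      using j by (simp add: present_def K_def h_def f_def Ecost_Ew Fcost_Fw)
  qed simp
  also have "h (f (K + 1)) = Ew c gam D p (K + 1) - Fw c gam p (K + 1)"
    using lp_le[of g K] by (simp add: h_def f_def p_def Ecost_Ew Fcost_Fw K_def)
  finally have sumh: "(\<Sum>\<theta>\<in>detours gam g D. h \<theta>) = wc c (seq_walk pat) - wc c (seq_walk gam)"
    using diff by simp
  have "(\<Sum>\<theta>\<in>detours gam g D. detour_cost c A gam pat D \<theta>) = (\<Sum>\<theta>\<in>detours gam g D. h \<theta>) / den"
    by (simp add: detour_cost_def h_def den_def sum_divide_distrib)
  also have "\<dots> = (lin c A (flow (seq_walk pat)) - lin c A (flow (seq_walk gam))) / den"
    using sumh linP linR by simp
  finally have eq: "(\<Sum>\<theta>\<in>detours gam g D. detour_cost c A gam pat D \<theta>) =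
     (lin c A (flow (seq_walk pat)) - lin c A (flow (seq_walk gam))) / den" .
  show ?thesis
    unfolding omega_def pat_def[symmetric] eq den_def ..
qed

end
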